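(* Let $\{P^{[n]}\in\mathbb{R}^{n\times n}\}_{n\in\mathbb{N}}$ be a sequence of stochastic matrices of increasing dimensions, and suppose there is no $P^{[n]}$-prominent family. Then (i) for every $k\in\mathbb{N}$ there is no $(P^{[n]})^k$-prominent family, and (ii) the sequence $\{P^{[n]}\}$ is finite-time wise.
   Context: A matrix $P$ is stochastic if $P\ge0$ and $P\mathbf{1}=\mathbf{1}$. Given a sequence of $n\times n$ stochastic matrices $\{Q^{[n]}\}$, a $Q^{[n]}$-prominent family is a sequence of sets $\mathcal{B}^{[n]}\subseteq\{1,\dots,n\}$ with $|\mathcal{B}^{[n]}|=o(n)$ whose total one-time influence $\frac1n\sum_{i=1}^n\sum_{j\in\mathcal{B}^{[n]}}Q^{[n]}_{ij}$ is of order $1$; here "there is no $Q^{[n]}$-prominent family" means: for every sequence of sets $\mathcal{B}^{[n]}\subseteq\{1,\dots,n\}$ with $|\mathcal{B}^{[n]}|=o(n)$, one has $\frac1n\sum_{i=1}^n\sum_{j\in\mathcal{B}^{[n]}}Q^{[n]}_{ij}\to0$ as $n\to\infty$. Finite-time wisdom: for each $n$, $x^{[n]}_i(0)=\mu+\xi^{[n]}_i(0)$ with $\mu\in\mathbb{R}$ fixed and $\xi^{[n]}_i(0)$ independent Gaussian with mean $0$ and common finite variance $\sigma^2$; $x^{[n]}(k+1)=P^{[n]}x^{[n]}(k)$; the sequence is finite-time wise if for every $k\in\mathbb{N}$, $\frac1n\sum_i x^{[n]}_i(k)\to\mu$ in probability as $n\to\infty$. *)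

theory Defs
  imports "HOL-Probability.Probability"
begin

text \<open>An n x n real matrix is represented as a function nat => nat => real,
only entries with indices below n being relevant.\<close>

definition stochastic_mat :: "nat \<Rightarrow> (nat \<Rightarrow> nat \<Rightarrow> real) \<Rightarrow> bool" where
  "stochastic_mat n A \<longleftrightarrow>
     (\<forall>i<n. \<forall>j<n. 0 \<le> A i j) \<and> (\<forall>i<n. (\<Sum>j<n. A i j) = 1)"

definition mat_mult :: "nat \<Rightarrow> (nat \<Rightarrow> nat \<Rightarrow> real) \<Rightarrow> (nat \<Rightarrow> nat \<Rightarrow> real) \<Rightarrow> (nat \<Rightarrow> nat \<Rightarrow> real)" where
  "mat_mult n A B = (\<lambda>i j. \<Sum>l<n. A i l * B l j)"

fun mat_pow :: "nat \<Rightarrow> (nat \<Rightarrow> nat \<Rightarrow> real) \<Rightarrow> nat \<Rightarrow> (nat \<Rightarrow> nat \<Rightarrow> real)" where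
  "mat_pow n A 0 = (\<lambda>i j. if i = j then 1 else 0)"
| "mat_pow n A (Suc k) = mat_mult n (mat_pow n A k) A"

definition influence :: "nat \<Rightarrow> (nat \<Rightarrow> nat \<Rightarrow> real) \<Rightarrow> nat set \<Rightarrow> real" where
  "influence n Q B = (1 / real n) * (\<Sum>i<n. \<Sum>j\<in>B. Q i j)"

definition no_prominent_family :: "(nat \<Rightarrow> nat \<Rightarrow> nat \<Rightarrow> real) \<Rightarrow> bool" where
  "no_prominent_family Q \<longleftrightarrow>
     (\<forall>B :: nat \<Rightarrow> nat set.
        (\<forall>n. B n \<subseteq> {..<n}) \<and> (\<lambda>n. real (card (B n)) / real n) \<longlonglongrightarrow> 0
        \<longrightarrow> (\<lambda>n. influence n (Q n) (B n)) \<longlonglongrightarrow> 0)"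

definition opinion :: "nat \<Rightarrow> (nat \<Rightarrow> nat \<Rightarrow> real) \<Rightarrow> (nat \<Rightarrow> real) \<Rightarrow> nat \<Rightarrow> nat \<Rightarrow> real" where
  "opinion n P x0 k i = (\<Sum>j<n. mat_pow n P k i j * x0 j)"

definition finite_time_wise ::
  "'a measure \<Rightarrow> (nat \<Rightarrow> nat \<Rightarrow> nat \<Rightarrow> real) \<Rightarrow> real \<Rightarrow> (nat \<Rightarrow> nat \<Rightarrow> 'a \<Rightarrow> real) \<Rightarrow> bool" where
  "finite_time_wise M P \<mu> \<xi> \<longleftrightarrow>
     (\<forall>k::nat. \<forall>\<epsilon>>0.
        (\<lambda>n. measure M {\<omega> \<in> space M.
               \<bar>(1 / real n) * (\<Sum>i<n. opinion n (P n) (\<lambda>j. \<mu> + \<xi> n j \<omega>) k i) - \<mu>\<bar> > \<epsilon>})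
        \<longlonglongrightarrow> 0)"

end

theory Submission
  imports Defs
begin

lemma pow_nonneg:
  assumes "stochastic_mat n A" "i < n" "j < n"
  shows "0 \<le> mat_pow n A k i j"
  using assms(2,3)
proof (induction k arbitrary: j)
  case 0 then show ?case by simp
next
  case (Suc k)
  have *: "\<And>l. l \<in> {..<n} \<Longrightarrow> 0 \<le> mat_pow n A k i l * A l j"
    using Suc assms(1) by (auto simp: stochastic_mat_def intro!: mult_nonneg_nonneg)
  show ?case unfolding mat_pow.simps mat_mult_def by (rule sum_nonneg) (rule *)
qed

lemma pow_rowsum:
  assumes "stochastic_mat n A" "i < n"
  shows "(\<Sum>j<n. mat_pow n A k i j) = 1"
proof (induction k)
  case 0 then show ?case using assms(2) by simp
next
  case (Suc k)
  have "(\<Sum>j<n. mat_pow n A (Suc k) i j) = (\<Sum>l<n. mat_pow n A k i l * (\<Sum>j<n. A l j))"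
    unfolding mat_pow.simps mat_mult_def sum_distrib_left by (rule sum.swap)
  also have "\<dots> = (\<Sum>l<n. mat_pow n A k i l)"
    using assms(1) by (auto simp: stochastic_mat_def intro!: sum.cong)
  finally show ?case using Suc by simp
qed

lemma influence_nonneg:
  assumes "stochastic_mat n A" "B \<subseteq> {..<n}"
  shows "0 \<le> influence n (mat_pow n A k) B"
  unfolding influence_def using assms pow_nonneg[OF assms(1)]
  by (intro mult_nonneg_nonneg sum_nonneg) auto

lemma step:
  assumes stoch: "\<And>n. stochastic_mat n (P n)"
    and noP: "no_prominent_family P"
    and noQ: "no_prominent_family (\<lambda>n. mat_pow n (P n) k)"
  shows "no_prominent_family (\<lambda>n. mat_pow n (P n) (Suc k))"
  unfolding no_prominent_family_def
proof (intro allI impI)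
  fix B :: "nat \<Rightarrow> nat set"
  assume "(\<forall>n. B n \<subseteq> {..<n}) \<and> (\<lambda>n. real (card (B n)) / real n) \<longlonglongrightarrow> 0"
  then have Bsub: "\<And>n. B n \<subseteq> {..<n}" and Bcard: "(\<lambda>n. real (card (B n)) / real n) \<longlonglongrightarrow> 0"
    by auto
  define a where "a n = influence n (P n) (B n)" for n
  have a0: "a \<longlonglongrightarrow> 0" using noP Bsub Bcard unfolding no_prominent_family_def a_def by blast
  define w where "w n l = (\<Sum>j\<in>B n. P n l j)" for n l
  define L where "L n = {l. l < n \<and> w n l > sqrt (a n)}" for n
  define Q where "Q n = mat_pow n (P n) k" for n
  have Bfin: "finite (B n)" for n using Bsub finite_subset by blast
  have w_nonneg: "0 \<le> w n l" if "l < n" for n l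
    unfolding w_def using Bsub[of n] that stoch[of n]
    by (intro sum_nonneg) (auto simp: stochastic_mat_def)
  have w_le1: "w n l \<le> 1" if "l < n" for n l
  proof -
    have "w n l \<le> (\<Sum>j<n. P n l j)"
      unfolding w_def using Bsub[of n] that stoch[of n]
      by (intro sum_mono2) (auto simp: stochastic_mat_def)
    also have "\<dots> = 1" using that stoch[of n] by (auto simp: stochastic_mat_def)
    finally show ?thesis .
  qed
  have a_eq: "a n = (1 / real n) * (\<Sum>l<n. w n l)" for n
    unfolding a_def influence_def w_def ..
  have a_nonneg: "0 \<le> a n" for n
    unfolding a_eq using w_nonneg by (intro mult_nonneg_nonneg sum_nonneg) auto
  have Lsub: "L n \<subseteq> {..<n}" for n unfolding L_def by auto
  have Lfin: "finite (L n)" for n using Lsub finite_subset by blast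
  have cardL: "real (card (L n)) / real n \<le> sqrt (a n)" for n
  proof (cases "n = 0")
    case True then show ?thesis using a_nonneg by simp
  next
    case False
    then have npos: "real n > 0" by simp
    have sumL: "(\<Sum>l\<in>L n. w n l) \<le> real n * a n"
    proof -
      have "(\<Sum>l\<in>L n. w n l) \<le> (\<Sum>l<n. w n l)"
        using Lsub[of n] w_nonneg by (intro sum_mono2) auto
      also have "\<dots> = real n * a n" using npos unfolding a_eq by simp
      finally show ?thesis .
    qed
    have lowL: "real (card (L n)) * sqrt (a n) \<le> (\<Sum>l\<in>L n. w n l)"
    proof -
      have "(\<Sum>l\<in>L n. sqrt (a n)) \<le> (\<Sum>l\<in>L n. w n l)"
        by (intro sum_mono) (auto simp: L_def)
      then show ?thesis by simp
    qed
    show ?thesis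
    proof (cases "sqrt (a n) > 0")
      case True
      have "real (card (L n)) * sqrt (a n) \<le> (real n * sqrt (a n)) * sqrt (a n)"
        using sumL lowL a_nonneg[of n] by (simp add: mult.assoc)
      then have "real (card (L n)) \<le> real n * sqrt (a n)"
        using True by (rule mult_right_le_imp_le)
      then show ?thesis using npos by (simp add: divide_simps mult.commute)
    next
      case False
      then have s0: "sqrt (a n) = 0" using a_nonneg[of n] by simp
      then have "a n = 0" by simp
      then have "(\<Sum>l<n. w n l) = 0" using npos unfolding a_eq by simp
      then have "\<forall>l\<in>{..<n}. w n l = 0" using w_nonneg
        by (subst sum_nonneg_eq_0_iff[symmetric]) auto
      then have "L n = {}" unfolding L_def using s0 by auto
      then show ?thesis using a_nonneg[of n] by simp
    qed
  qed
  have sq0: "(\<lambda>n. sqrt (a n)) \<longlonglongrightarrow> 0"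
    using tendsto_real_sqrt[OF a0] by simp
  have Lcard0: "(\<lambda>n. real (card (L n)) / real n) \<longlonglongrightarrow> 0"
    by (rule tendsto_sandwich[OF _ _ tendsto_const sq0]) (simp_all add: always_eventually cardL)
  have iL: "(\<lambda>n. influence n (Q n) (L n)) \<longlonglongrightarrow> 0"
    using noQ Lsub Lcard0 unfolding no_prominent_family_def Q_def by blast
  have bound: "influence n (mat_pow n (P n) (Suc k)) (B n) \<le> influence n (Q n) (L n) + sqrt (a n)" for n
  proof -
    have Qnn: "0 \<le> Q n i l" if "i < n" "l < n" for i l
      unfolding Q_def using pow_nonneg[OF stoch that] .
    have e1: "(\<Sum>i<n. \<Sum>j\<in>B n. mat_pow n (P n) (Suc k) i j) = (\<Sum>i<n. \<Sum>l<n. Q n i l * w n l)"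
    proof (rule sum.cong[OF refl])
      fix i show "(\<Sum>j\<in>B n. mat_pow n (P n) (Suc k) i j) = (\<Sum>l<n. Q n i l * w n l)"
        unfolding Q_def w_def mat_pow.simps mat_mult_def sum_distrib_left by (rule sum.swap)
    qed
    have e2: "(\<Sum>l<n. Q n i l * w n l) \<le> (\<Sum>l\<in>L n. Q n i l) + sqrt (a n)" if "i < n" for i
    proof -
      have "(\<Sum>l<n. Q n i l * w n l) \<le> (\<Sum>l<n. (if l \<in> L n then Q n i l else 0) + Q n i l * sqrt (a n))"
      proof (intro sum_mono)
        fix l assume l: "l \<in> {..<n}"
        show "Q n i l * w n l \<le> (if l \<in> L n then Q n i l else 0) + Q n i l * sqrt (a n)"
        proof (cases "l \<in> L n")
          case True
          then show ?thesis using Qnn[OF that] l w_le1[of l n] a_nonneg[of n]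
            by (auto intro!: add_increasing2 mult_nonneg_nonneg mult_left_le)
        next
          case False
          then have "w n l \<le> sqrt (a n)" using l unfolding L_def by auto
          then show ?thesis using Qnn[OF that] l False by (auto intro: mult_left_mono)
        qed
      qed
      also have "\<dots> = (\<Sum>l<n. if l \<in> L n then Q n i l else 0) + sqrt (a n) * (\<Sum>l<n. Q n i l)"
        by (simp add: sum.distrib sum_distrib_left mult.commute)
      also have "(\<Sum>l<n. if l \<in> L n then Q n i l else 0) = (\<Sum>l\<in>L n. Q n i l)"
        using Lsub[of n] by (simp add: sum.inter_restrict[symmetric] Int_absorb1)
      also have "(\<Sum>l<n. Q n i l) = 1" unfolding Q_def using pow_rowsum[OF stoch that] .
      finally show ?thesis by simp
    qed
    have "(\<Sum>i<n. \<Sum>l<n. Q n i l * w n l) \<le> (\<Sum>i<n. (\<Sum>l\<in>L n. Q n i l) + sqrt (a n))"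
      using e2 by (intro sum_mono) auto
    also have "\<dots> = (\<Sum>i<n. \<Sum>l\<in>L n. Q n i l) + real n * sqrt (a n)"
      by (simp add: sum.distrib)
    finally have "(1 / real n) * (\<Sum>i<n. \<Sum>j\<in>B n. mat_pow n (P n) (Suc k) i j)
       \<le> (1 / real n) * ((\<Sum>i<n. \<Sum>l\<in>L n. Q n i l) + real n * sqrt (a n))"
      unfolding e1 by (intro mult_left_mono) auto
    also have "\<dots> \<le> influence n (Q n) (L n) + sqrt (a n)"
      using a_nonneg[of n] by (cases "n = 0") (auto simp: influence_def field_simps)
    finally show ?thesis unfolding influence_def .
  qed
  show "(\<lambda>n. influence n (mat_pow n (P n) (Suc k)) (B n)) \<longlonglongrightarrow> 0"
    by (rule tendsto_sandwich[OF _ _ tendsto_const tendsto_add[OF iL sq0, simplified]])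
       (intro always_eventually allI influence_nonneg[OF stoch Bsub] bound)+
qed

lemma (in prob_space) pair_moment:
  fixes X :: "nat \<Rightarrow> 'a \<Rightarrow> real"
  assumes sig: "\<sigma> > 0"
    and D: "\<And>i. i < n \<Longrightarrow> distributed M lborel (X i) (normal_density 0 \<sigma>)"
    and ind: "indep_vars (\<lambda>_. borel) X {..<n}"
    and ij: "i < n" "j < n"
  shows "integrable M (\<lambda>\<omega>. X i \<omega> * X j \<omega>) \<and>
         (\<integral>\<omega>. X i \<omega> * X j \<omega> \<partial>M) = (if i = j then \<sigma>\<^sup>2 else 0)"
proof -
  have int1: "integrable M (X l)" if "l < n" for l
    by (rule distributed_integrable_var[OF D[OF that]])
       (auto intro: integrable_normal_moment_nz_1[OF sig])
  have exp0: "expectation (X l) = 0" if "l < n" for l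
    using normal_distributed_expectation[OF sig D[OF that]] .
  show ?thesis
  proof (cases "i = j")
    case True
    have "integrable lborel (\<lambda>x. normal_density 0 \<sigma> x * (x - 0) ^ 2)"
      by (rule integrable_normal_moment[OF sig])
    then have "integrable lborel (\<lambda>x. normal_density 0 \<sigma> x * (x * x))"
      by (simp add: power2_eq_square)
    then have i2: "integrable M (\<lambda>\<omega>. X i \<omega> * X i \<omega>)"
      using distributed_integrable[OF D[OF ij(1)], of "\<lambda>x. x * x"] by simp
    have "variance (X i) = \<sigma>\<^sup>2" by (rule normal_distributed_variance[OF sig D[OF ij(1)]])
    then have "(\<integral>\<omega>. X i \<omega> * X i \<omega> \<partial>M) = \<sigma>\<^sup>2"
      using exp0[OF ij(1)] by (simp add: power2_eq_square)
    then show ?thesis using True i2 by simp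
  next
    case False
    have "indep_var
      borel ((\<lambda>f. f i) \<circ> (\<lambda>\<omega>. restrict (\<lambda>i. X i \<omega>) {i}))
      borel ((\<lambda>f. f j) \<circ> (\<lambda>\<omega>. restrict (\<lambda>i. X i \<omega>) {j}))"
      using False ij by (intro indep_var_compose[OF indep_var_restrict[OF ind]]) auto
    also have "((\<lambda>f. f i) \<circ> (\<lambda>\<omega>. restrict (\<lambda>i. X i \<omega>) {i})) = X i"
      by auto
    also have "((\<lambda>f. f j) \<circ> (\<lambda>\<omega>. restrict (\<lambda>i. X i \<omega>) {j})) = X j"
      by auto
    finally have iv: "indep_var borel (X i) borel (X j)" .
    have "integrable M (\<lambda>\<omega>. X i \<omega> * X j \<omega>)"
      by (rule indep_var_integrable[OF iv int1[OF ij(1)] int1[OF ij(2)]])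
    moreover have "(\<integral>\<omega>. X i \<omega> * X j \<omega> \<partial>M) = 0"
      using indep_var_lebesgue_integral[OF iv int1[OF ij(1)] int1[OF ij(2)]] exp0 ij by simp
    ultimately show ?thesis using False by simp
  qed
qed

lemma (in prob_space) sum_moment:
  fixes X :: "nat \<Rightarrow> 'a \<Rightarrow> real"
  assumes sig: "\<sigma> > 0"
    and D: "\<And>i. i < n \<Longrightarrow> distributed M lborel (X i) (normal_density 0 \<sigma>)"
    and ind: "indep_vars (\<lambda>_. borel) X {..<n}"
  shows "integrable M (\<lambda>\<omega>. (\<Sum>j<n. c j * X j \<omega>)\<^sup>2) \<and>
         (\<integral>\<omega>. (\<Sum>j<n. c j * X j \<omega>)\<^sup>2 \<partial>M) = \<sigma>\<^sup>2 * (\<Sum>j<n. (c j)\<^sup>2)"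
proof -
  have eq: "(\<lambda>\<omega>. (\<Sum>j<n. c j * X j \<omega>)\<^sup>2) = (\<lambda>\<omega>. \<Sum>i<n. \<Sum>j<n. (c i * c j) * (X i \<omega> * X j \<omega>))"
    by (auto simp: power2_eq_square sum_product intro!: sum.cong ext)
  have pm: "\<And>i j. i \<in> {..<n} \<Longrightarrow> j \<in> {..<n} \<Longrightarrow> integrable M (\<lambda>\<omega>. X i \<omega> * X j \<omega>) \<and>
         (\<integral>\<omega>. X i \<omega> * X j \<omega> \<partial>M) = (if i = j then \<sigma>\<^sup>2 else 0)"
    using pair_moment[OF sig D ind] by blast
  have int: "integrable M (\<lambda>\<omega>. \<Sum>i<n. \<Sum>j<n. (c i * c j) * (X i \<omega> * X j \<omega>))"
    using pm by (intro Bochner_Integration.integrable_sum integrable_mult_right) auto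
  have "(\<integral>\<omega>. (\<Sum>i<n. \<Sum>j<n. (c i * c j) * (X i \<omega> * X j \<omega>)) \<partial>M)
      = (\<Sum>i<n. \<Sum>j<n. (c i * c j) * (\<integral>\<omega>. X i \<omega> * X j \<omega> \<partial>M))"
  proof -
    have "(\<integral>\<omega>. (\<Sum>i<n. \<Sum>j<n. (c i * c j) * (X i \<omega> * X j \<omega>)) \<partial>M)
      = (\<Sum>i<n. (\<integral>\<omega>. (\<Sum>j<n. (c i * c j) * (X i \<omega> * X j \<omega>)) \<partial>M))"
      using pm by (intro Bochner_Integration.integral_sum Bochner_Integration.integrable_sum integrable_mult_right) auto
    also have "\<dots> = (\<Sum>i<n. \<Sum>j<n. (\<integral>\<omega>. (c i * c j) * (X i \<omega> * X j \<omega>) \<partial>M))"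
      using pm by (intro sum.cong refl Bochner_Integration.integral_sum integrable_mult_right) auto
    also have "\<dots> = (\<Sum>i<n. \<Sum>j<n. (c i * c j) * (\<integral>\<omega>. X i \<omega> * X j \<omega> \<partial>M))"
      by simp
    finally show ?thesis .
  qed
  also have "\<dots> = (\<Sum>i<n. \<Sum>j<n. (c i * c j) * (if i = j then \<sigma>\<^sup>2 else 0))"
    using pm by (intro sum.cong refl) simp
  also have "\<dots> = \<sigma>\<^sup>2 * (\<Sum>j<n. (c j)\<^sup>2)"
    by (simp add: sum_distrib_left power2_eq_square mult.commute if_distrib cong: if_cong)
  finally show ?thesis using int unfolding eq by simp
qed


lemma all_k:
  assumes stoch: "\<And>n. stochastic_mat n (P n)"
    and noP: "no_prominent_family P"
  shows "no_prominent_family (\<lambda>n. mat_pow n (P n) k)"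
proof (induction k)
  case 0
  show ?case unfolding no_prominent_family_def
  proof (intro allI impI)
    fix B :: "nat \<Rightarrow> nat set"
    assume "(\<forall>n. B n \<subseteq> {..<n}) \<and> (\<lambda>n. real (card (B n)) / real n) \<longlonglongrightarrow> 0"
    then have Bsub: "\<And>n. B n \<subseteq> {..<n}" and Bcard: "(\<lambda>n. real (card (B n)) / real n) \<longlonglongrightarrow> 0"
      by auto
    have "influence n (mat_pow n (P n) 0) (B n) = real (card (B n)) / real n" for n
    proof -
      have fin: "finite (B n)" using Bsub finite_subset by blast
      have "(\<Sum>i<n. \<Sum>j\<in>B n. mat_pow n (P n) 0 i j) = (\<Sum>i<n. if i \<in> B n then 1 else 0)"
        using fin by (intro sum.cong refl) simp
      also have "\<dots> = real (card ({..<n} \<inter> B n))"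
        by (simp add: sum.If_cases)
      also have "{..<n} \<inter> B n = B n" using Bsub[of n] by blast
      finally show ?thesis unfolding influence_def by simp
    qed
    then show "(\<lambda>n. influence n (mat_pow n (P n) 0) (B n)) \<longlonglongrightarrow> 0"
      using Bcard by simp
  qed
next
  case (Suc k)
  then show ?case by (rule step[OF stoch noP])
qed

lemma colsq:
  assumes stoch: "\<And>n. stochastic_mat n (P n)"
    and noQ: "no_prominent_family (\<lambda>n. mat_pow n (P n) k)"
  shows "(\<lambda>n. (\<Sum>j<n. (\<Sum>i<n. mat_pow n (P n) k i j)\<^sup>2) / (real n)\<^sup>2) \<longlonglongrightarrow> 0"
proof -
  define Q where "Q n = mat_pow n (P n) k" for n
  define c where "c n j = (\<Sum>i<n. Q n i j)" for n j
  have c_nonneg: "0 \<le> c n j" if "j < n" for n j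
    unfolding c_def Q_def using pow_nonneg[OF stoch _ that] by (intro sum_nonneg) auto
  have csum: "(\<Sum>j<n. c n j) = real n" for n
  proof -
    have "(\<Sum>j<n. c n j) = (\<Sum>i<n. \<Sum>j<n. Q n i j)"
      unfolding c_def by (rule sum.swap)
    also have "\<dots> = (\<Sum>i<n. 1)"
      unfolding Q_def using pow_rowsum[OF stoch] by (intro sum.cong refl) auto
    finally show ?thesis by simp
  qed
  define m where "m n = (if n = 0 then 0 else Max (c n ` {..<n}))" for n
  have cle: "c n j \<le> m n" if "j < n" for n j
    using that unfolding m_def by (auto intro!: Max_ge)
  have mex: "\<exists>j. j < n \<and> c n j = m n" if "n > 0" for n
  proof -
    have "Max (c n ` {..<n}) \<in> c n ` {..<n}"
      using that by (intro Max_in) auto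
    then show ?thesis using that unfolding m_def by auto
  qed
  define jm where "jm n = (SOME j. j < n \<and> c n j = m n)" for n
  have jm: "jm n < n \<and> c n (jm n) = m n" if "n > 0" for n
    unfolding jm_def using someI_ex[OF mex[OF that]] .
  define B where "B n = (if n = 0 then {} else {jm n})" for n
  have Bsub: "\<forall>n. B n \<subseteq> {..<n}" unfolding B_def using jm by auto
  have Bc: "real (card (B n)) / real n = 1 / real n" for n
    unfolding B_def by simp
  have Bcard: "(\<lambda>n. real (card (B n)) / real n) \<longlonglongrightarrow> 0"
    unfolding Bc by (rule lim_1_over_n)
  have infl: "influence n (Q n) (B n) = m n / real n" for n
  proof (cases "n = 0")
    case True then show ?thesis by (simp add: influence_def B_def)
  next
    case False
    then show ?thesis using jm[of n] by (simp add: influence_def B_def c_def[symmetric])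
  qed
  have "(\<lambda>n. influence n (mat_pow n (P n) k) (B n)) \<longlonglongrightarrow> 0"
    using noQ Bsub Bcard unfolding no_prominent_family_def by blast
  then have m0: "(\<lambda>n. m n / real n) \<longlonglongrightarrow> 0"
    unfolding Q_def[symmetric] infl .
  have bnd: "(\<Sum>j<n. (c n j)\<^sup>2) / (real n)\<^sup>2 \<le> m n / real n" for n
  proof (cases "n = 0")
    case True then show ?thesis by simp
  next
    case False
    have "(\<Sum>j<n. (c n j)\<^sup>2) \<le> (\<Sum>j<n. m n * c n j)"
      unfolding power2_eq_square using c_nonneg cle
      by (intro sum_mono mult_right_mono) auto
    also have "\<dots> = m n * real n" unfolding sum_distrib_left[symmetric] csum ..
    finally have "(\<Sum>j<n. (c n j)\<^sup>2) / (real n)\<^sup>2 \<le> m n * real n / (real n)\<^sup>2"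
      by (intro divide_right_mono) auto
    also have "\<dots> = m n / real n" using False by (simp add: power2_eq_square)
    finally show ?thesis .
  qed
  have "(\<lambda>n. (\<Sum>j<n. (c n j)\<^sup>2) / (real n)\<^sup>2) \<longlonglongrightarrow> 0"
    by (rule tendsto_sandwich[OF _ _ tendsto_const m0])
       (intro always_eventually allI divide_nonneg_nonneg sum_nonneg zero_le_power2 bnd)+
  then show ?thesis unfolding c_def Q_def .
qed

lemma avg_eq:
  assumes st: "stochastic_mat n A" and n: "n > 0"
  shows "(1 / real n) * (\<Sum>i<n. opinion n A (\<lambda>j. \<mu> + x j) k i) - \<mu>
       = (\<Sum>j<n. (\<Sum>i<n. mat_pow n A k i j) * x j) / real n"
proof -
  have "(\<Sum>i<n. opinion n A (\<lambda>j. \<mu> + x j) k i)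
      = (\<Sum>i<n. \<mu> * (\<Sum>j<n. mat_pow n A k i j) + (\<Sum>j<n. mat_pow n A k i j * x j))"
    unfolding opinion_def by (intro sum.cong refl) (simp add: algebra_simps sum.distrib sum_distrib_left)
  also have "\<dots> = (\<Sum>i<n. \<mu> + (\<Sum>j<n. mat_pow n A k i j * x j))"
    using pow_rowsum[OF st] by (intro sum.cong refl) auto
  also have "\<dots> = real n * \<mu> + (\<Sum>i<n. \<Sum>j<n. mat_pow n A k i j * x j)"
    by (simp add: sum.distrib)
  also have "(\<Sum>i<n. \<Sum>j<n. mat_pow n A k i j * x j) = (\<Sum>j<n. \<Sum>i<n. mat_pow n A k i j * x j)"
    by (rule sum.swap)
  also have "\<dots> = (\<Sum>j<n. (\<Sum>i<n. mat_pow n A k i j) * x j)"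
    by (simp add: sum_distrib_right)
  finally show ?thesis using n by (simp add: field_simps)
qed

theorem theorem4:
  fixes P :: "nat \<Rightarrow> nat \<Rightarrow> nat \<Rightarrow> real"
    and M :: "'a measure" and \<mu> \<sigma> :: real
    and \<xi> :: "nat \<Rightarrow> nat \<Rightarrow> 'a \<Rightarrow> real"
  assumes stoch: "\<And>n. stochastic_mat n (P n)"
    and noprom: "no_prominent_family P"
    and prob: "prob_space M"
    and sigma_pos: "\<sigma> > 0"
    and gauss: "\<And>n i. i < n \<Longrightarrow> distributed M lborel (\<xi> n i) (normal_density 0 \<sigma>)"
    and indep: "\<And>n. prob_space.indep_vars M (\<lambda>_. borel) (\<xi> n) {..<n}"
  shows "(\<forall>k. no_prominent_family (\<lambda>n. mat_pow n (P n) k))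
         \<and> finite_time_wise M P \<mu> \<xi>"
proof
  show allk: "\<forall>k. no_prominent_family (\<lambda>n. mat_pow n (P n) k)"
    using all_k[OF stoch noprom] by blast
  interpret prob_space M by (rule prob)
  show "finite_time_wise M P \<mu> \<xi>"
    unfolding finite_time_wise_def
  proof (intro allI impI)
    fix k :: nat and \<epsilon> :: real
    assume eps: "\<epsilon> > 0"
    define c where "c n j = (\<Sum>i<n. mat_pow n (P n) k i j)" for n j
    have cs: "(\<lambda>n. (\<Sum>j<n. (c n j)\<^sup>2) / (real n)\<^sup>2) \<longlonglongrightarrow> 0"
      unfolding c_def using colsq[OF stoch] allk by blast
    define A where "A n = {\<omega> \<in> space M.
               \<bar>(1 / real n) * (\<Sum>i<n. opinion n (P n) (\<lambda>j. \<mu> + \<xi> n j \<omega>) k i) - \<mu>\<bar> > \<epsilon>}" for n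
    have bnd: "measure M (A n) \<le> \<sigma>\<^sup>2 * ((\<Sum>j<n. (c n j)\<^sup>2) / (real n)\<^sup>2) / \<epsilon>\<^sup>2" if n: "n > 0" for n
    proof -
      define f where "f \<omega> = (\<Sum>j<n. c n j * \<xi> n j \<omega>) / real n" for \<omega>
      have Aeq: "A n = {\<omega> \<in> space M. \<bar>f \<omega>\<bar> > \<epsilon>}"
        unfolding A_def f_def c_def using avg_eq[OF stoch n] by simp
      have mxi: "\<xi> n j \<in> borel_measurable M" if "j < n" for j
        using distributed_measurable[OF gauss[OF that]] by simp
      have fm: "f \<in> borel_measurable M"
        unfolding f_def using mxi by (intro borel_measurable_divide borel_measurable_sum borel_measurable_times) auto
      have SM: "integrable M (\<lambda>\<omega>. (\<Sum>j<n. c n j * \<xi> n j \<omega>)\<^sup>2) \<and>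
         (\<integral>\<omega>. (\<Sum>j<n. c n j * \<xi> n j \<omega>)\<^sup>2 \<partial>M) = \<sigma>\<^sup>2 * (\<Sum>j<n. (c n j)\<^sup>2)"
        by (rule sum_moment[OF sigma_pos gauss indep])
      have f2: "(\<lambda>\<omega>. (f \<omega>)\<^sup>2) = (\<lambda>\<omega>. (\<Sum>j<n. c n j * \<xi> n j \<omega>)\<^sup>2 / (real n)\<^sup>2)"
        unfolding f_def by (simp add: power_divide)
      have intf: "integrable M (\<lambda>\<omega>. (f \<omega>)\<^sup>2)"
        unfolding f2 using SM by auto
      have Ef: "(\<integral>\<omega>. (f \<omega>)\<^sup>2 \<partial>M) = \<sigma>\<^sup>2 * ((\<Sum>j<n. (c n j)\<^sup>2) / (real n)\<^sup>2)"
        unfolding f2 using SM by simp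
      have "measure M (A n) \<le> measure M {\<omega> \<in> space M. \<bar>f \<omega>\<bar> \<ge> \<epsilon>}"
        unfolding Aeq using fm by (intro finite_measure_mono) auto
      also have "\<dots> \<le> (\<integral>\<omega>. (f \<omega>)\<^sup>2 \<partial>M) / \<epsilon>\<^sup>2"
        by (rule second_moment_method[OF fm intf eps])
      finally show ?thesis unfolding Ef .
    qed
    have lim: "(\<lambda>n. \<sigma>\<^sup>2 * ((\<Sum>j<n. (c n j)\<^sup>2) / (real n)\<^sup>2) / \<epsilon>\<^sup>2) \<longlonglongrightarrow> 0"
      using tendsto_divide[OF tendsto_mult[OF tendsto_const cs] tendsto_const, of "\<epsilon>\<^sup>2" "\<sigma>\<^sup>2"] eps by simp
    have ev: "eventually (\<lambda>n. measure M (A n) \<le> \<sigma>\<^sup>2 * ((\<Sum>j<n. (c n j)\<^sup>2) / (real n)\<^sup>2) / \<epsilon>\<^sup>2) sequentially"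
      using eventually_gt_at_top[of 0] by eventually_elim (rule bnd)
    have "(\<lambda>n. measure M (A n)) \<longlonglongrightarrow> 0"
      by (rule tendsto_sandwich[OF _ ev tendsto_const lim]) (simp add: always_eventually)
    then show "(\<lambda>n. measure M {\<omega> \<in> space M.
               \<bar>(1 / real n) * (\<Sum>i<n. opinion n (P n) (\<lambda>j. \<mu> + \<xi> n j \<omega>) k i) - \<mu>\<bar> > \<epsilon>})
        \<longlonglongrightarrow> 0" unfolding A_def .
  qed
qed

end
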